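(* Let $k,t\geq 2$ be integers and let $n$ be an integer with $2t\leq n\leq 3t$. Then $A_k(n,0^t)\leq \beta_k(t)^n$, where $\beta_k(t)=k-(k-1)k^{-t-1}$.
   Context: Words are over $\Sigma_k=\{0,1,\ldots,k-1\}$, and $0^t$ is the word consisting of $t$ zeros. $A_k(m,v)$ denotes the number of words of length $m$ over $\Sigma_k$ that do not contain $v$ as a factor. *)

theory Defs
  imports Complex_Main "HOL-Library.Sublist"
begin

text \<open>Words of length m over the alphabet {0,...,k-1}, represented as lists of naturals.
  A word v is a factor of w iff v is a contiguous sublist (infix) of w.\<close>

definition words :: "nat \<Rightarrow> nat \<Rightarrow> nat list set" where
  "words k m = {w. length w = m \<and> set w \<subseteq> {0..<k}}"

definition avoid_count :: "nat \<Rightarrow> nat \<Rightarrow> nat list \<Rightarrow> nat" where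
  "avoid_count k m v = card {w \<in> words k m. \<not> sublist v w}"

definition beta :: "nat \<Rightarrow> nat \<Rightarrow> real" where
  "beta k t = real k - (real k - 1) * real k powi (- int t - 1)"

end

theory Submission
  imports Defs
begin


lemma card_pos:
  assumes "\<forall>j. finite (S j)"
  shows "card {w. length w = n \<and> (\<forall>j<n. w!j \<in> S j)} = (\<Prod>j<n. card (S j))"
  using assms
proof (induction n arbitrary: S)
  case 0
  then show ?case by simp
next
  case (Suc n)
  have eq: "{w. length w = Suc n \<and> (\<forall>j<Suc n. w!j \<in> S j)} =
     (\<lambda>(a,xs). a#xs) ` (S 0 \<times> {xs. length xs = n \<and> (\<forall>j<n. xs!j \<in> S (Suc j))})"
  proof (rule set_eqI, rule iffI)
    fix w assume "w \<in> {w. length w = Suc n \<and> (\<forall>j<Suc n. w!j \<in> S j)}"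
    then obtain a xs where w: "w = a#xs" "length xs = n" and h: "\<forall>j<Suc n. w!j \<in> S j"
      by (auto simp: length_Suc_conv)
    have "a \<in> S 0" using h w by force
    moreover have "\<forall>j<n. xs!j \<in> S (Suc j)" using h w by force
    ultimately show "w \<in> (\<lambda>(a,xs). a#xs) ` (S 0 \<times> {xs. length xs = n \<and> (\<forall>j<n. xs!j \<in> S (Suc j))})"
      using w by auto
  next
    fix w assume "w \<in> (\<lambda>(a,xs). a#xs) ` (S 0 \<times> {xs. length xs = n \<and> (\<forall>j<n. xs!j \<in> S (Suc j))})"
    then show "w \<in> {w. length w = Suc n \<and> (\<forall>j<Suc n. w!j \<in> S j)}"
      by (auto simp: less_Suc_eq_0_disj)
  qed
  have inj: "inj_on (\<lambda>(a,xs). a#xs) (S 0 \<times> {xs. length xs = n \<and> (\<forall>j<n. xs!j \<in> S (Suc j))})"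
    by (auto simp: inj_on_def)
  have "card {w. length w = Suc n \<and> (\<forall>j<Suc n. w!j \<in> S j)} =
     card (S 0) * card {xs. length xs = n \<and> (\<forall>j<n. xs!j \<in> S (Suc j))}"
    unfolding eq card_image[OF inj] card_cartesian_product by simp
  also have "\<dots> = card (S 0) * (\<Prod>j<n. card (S (Suc j)))"
    using Suc.IH[of "\<lambda>j. S (Suc j)"] Suc.prems by simp
  also have "\<dots> = (\<Prod>j<Suc n. card (S j))"
    by (simp only: prod.lessThan_Suc_shift)
  finally show ?case .
qed

definition Sx :: "nat \<Rightarrow> nat \<Rightarrow> nat \<Rightarrow> nat \<Rightarrow> nat set" where
  "Sx k t i j = (if i \<le> j \<and> j < i+t then {0} else if j+1 = i \<or> j+1+t = i then {1..<k} else {0..<k})"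

lemma card_Sx: "card (Sx k t i j) = (if i \<le> j \<and> j < i+t then 1 else if j+1 = i \<or> j+1+t = i then k-1 else k)"
  by (simp add: Sx_def)

lemma prod_gen:
  fixes k t i n :: nat and N :: "nat set"
  assumes N: "N = {j. j < n \<and> \<not>(i \<le> j \<and> j < i+t) \<and> (j+1 = i \<or> j+1+t = i)}"
    and it: "i + t \<le> n"
  shows "(\<Prod>j<n. card (Sx k t i j)) = (k-1)^card N * k^(n - t - card N)"
proof -
  have fin: "finite {..<n}" by simp
  have A: "{..<n} \<inter> {j. i \<le> j \<and> j < i+t} = {i..<i+t}" using it by auto
  have B: "{..<n} \<inter> - {j. i \<le> j \<and> j < i+t} \<inter> {j. j+1 = i \<or> j+1+t = i} = N"
    using N by auto
  have C: "{..<n} \<inter> - {j. i \<le> j \<and> j < i+t} \<inter> - {j. j+1 = i \<or> j+1+t = i} = ({..<n} - {i..<i+t}) - N"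
    using N by auto
  have NS: "N \<subseteq> {..<n} - {i..<i+t}" using N by auto
  have cC: "card (({..<n} - {i..<i+t}) - N) = n - t - card N"
  proof -
    have s1: "{i..<i+t} \<subseteq> {..<n}" using it by auto
    have "card ({..<n} - {i..<i+t}) = n - t" using s1 by (simp add: card_Diff_subset)
    moreover have "finite N" using NS finite_subset by blast
    ultimately show ?thesis using NS by (simp add: card_Diff_subset)
  qed
  have "(\<Prod>j<n. card (Sx k t i j)) = (\<Prod>j\<in>{..<n}. if i \<le> j \<and> j < i+t then 1 else if j+1 = i \<or> j+1+t = i then k-1 else k)"
    by (simp add: card_Sx)
  also have "\<dots> = (\<Prod>j\<in>{..<n} \<inter> - {j. i \<le> j \<and> j < i+t}. if j+1 = i \<or> j+1+t = i then k-1 else k)"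
    by (simp add: prod.If_cases[OF fin])
  also have "\<dots> = (k-1)^card N * k^(n - t - card N)"
    by (subst prod.If_cases, simp, simp only: B C cC prod_constant)
  finally show ?thesis .
qed


lemma Sx_sub: "1 \<le> k \<Longrightarrow> Sx k t i j \<subseteq> {0..<k}" by (auto simp: Sx_def)
lemma Sx_zero: "i \<le> j \<Longrightarrow> j < i+t \<Longrightarrow> Sx k t i j = {0}" by (simp add: Sx_def)
lemma Sx_one: "\<not>(i \<le> j \<and> j < i+t) \<Longrightarrow> j+1 = i \<or> j+1+t = i \<Longrightarrow> Sx k t i j = {1..<k}"
  unfolding Sx_def by (simp only: if_False if_True if_not_P if_P)

lemma card_words: "card (words k n) = k ^ n"
proof -
  have "words k n = {w. length w = n \<and> (\<forall>j<n. w!j \<in> {0..<k})}"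
    by (auto simp: words_def set_conv_nth)
  then show ?thesis using card_pos[of "\<lambda>_. {0..<k}" n] by simp
qed

lemma finite_words: "finite (words k n)"
  unfolding words_def using finite_lists_length_eq[of "{0..<k}" n] by (simp add: conj_commute)

theorem lemma13:
  fixes k t n :: nat
  assumes "k \<ge> 2" and "t \<ge> 2" and "2 * t \<le> n" and "n \<le> 3 * t"
  shows "real (avoid_count k n (replicate t 0)) \<le> beta k t ^ n"
proof -
  define Fam where "Fam i = {w. length w = n \<and> (\<forall>j<n. w!j \<in> Sx k t i j)}" for i
  define I where "I = {1..n-t}"
  define Cont where "Cont = {w \<in> words k n. sublist (replicate t 0) w}"
  define e where "e = n - t - 2"
  have ne: "n = t + 2 + e" using assms unfolding e_def by simp
  have finS: "\<forall>j. finite (Sx k t i j)" for i by (simp add: Sx_def)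
  have cardF: "card (Fam i) = (\<Prod>j<n. card (Sx k t i j))" for i
    unfolding Fam_def by (rule card_pos[OF finS])
  have low1: "card (Fam i) = (k-1) * k^(e+1)" if "1 \<le> i" "i \<le> t" for i
  proof -
    have N: "{j. j < n \<and> \<not>(i \<le> j \<and> j < i+t) \<and> (j+1 = i \<or> j+1+t = i)} = {i-1}"
      using that assms by auto
    have "(\<Prod>j<n. card (Sx k t i j)) = (k-1)^card {i-1} * k^(n - t - card {i-1})"
      using prod_gen[OF refl, of i t n k] that assms unfolding N by simp
    moreover have "n - t - card {i-1} = e + 1" using ne by simp
    ultimately show ?thesis unfolding cardF by simp
  qed
  have low2: "card (Fam i) = (k-1)^2 * k^e" if "t < i" "i \<le> n - t" for i
  proof -
    have N: "{j. j < n \<and> \<not>(i \<le> j \<and> j < i+t) \<and> (j+1 = i \<or> j+1+t = i)} = {i-1, i-1-t}"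
      using that assms by auto
    have c: "card {i-1, i-1-t} = 2" using that assms by auto
    have "(\<Prod>j<n. card (Sx k t i j)) = (k-1)^card {i-1, i-1-t} * k^(n - t - card {i-1, i-1-t})"
      using prod_gen[OF refl, of i t n k] that assms unfolding N by simp
    moreover have "n - t - 2 = e" using ne by simp
    ultimately show ?thesis unfolding cardF c by simp
  qed
  have sub: "Fam i \<subseteq> Cont" if "i \<in> I" for i
  proof
    fix w assume w: "w \<in> Fam i"
    have it: "i + t \<le> n" using that unfolding I_def by auto
    have len: "length w = n" and h: "\<forall>j<n. w!j \<in> Sx k t i j" using w unfolding Fam_def by auto
    have "set w \<subseteq> {0..<k}"
    proof
      fix a assume "a \<in> set w"
      then obtain j where "j < n" "w!j = a" using len by (auto simp: in_set_conv_nth)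
      then show "a \<in> {0..<k}" using h Sx_sub[of k t i j] assms by auto
    qed
    then have ww: "w \<in> words k n" using len by (simp add: words_def)
    have tk: "take t (drop i w) = replicate t 0"
    proof (rule nth_equalityI)
      show "length (take t (drop i w)) = length (replicate t (0::nat))" using len it by simp
      fix m assume "m < length (take t (drop i w))"
      then have m: "m < t" using len it by simp
      have "w ! (i+m) \<in> Sx k t i (i+m)" using h m it by simp
      moreover have "Sx k t i (i+m) = {0}" using m by (intro Sx_zero) auto
      ultimately show "take t (drop i w) ! m = replicate t 0 ! m" using m it len by simp
    qed
    have "w = take i w @ take t (drop i w) @ drop t (drop i w)" by (metis append_take_drop_id)
    then have "sublist (replicate t 0) w" unfolding sublist_def tk by blast
    then show "w \<in> Cont" using ww unfolding Cont_def by simp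
  qed
  have disj: False if "i \<in> I" "j \<in> I" "i < j" "w \<in> Fam i" "w \<in> Fam j" for i j w
  proof -
    have hi: "\<forall>p<n. w!p \<in> Sx k t i p" and hj: "\<forall>p<n. w!p \<in> Sx k t j p"
      using that unfolding Fam_def by auto
    have ij: "1 \<le> i" "j \<le> n - t" using that unfolding I_def by auto
    show False
    proof (cases "j - 1 < i + t")
      case True
      have "w!(j-1) \<in> Sx k t i (j-1)" "w!(j-1) \<in> Sx k t j (j-1)" using hi hj ij that(3) by auto
      moreover have "Sx k t i (j-1) = {0}" using True that(3) by (intro Sx_zero) auto
      moreover have "Sx k t j (j-1) = {1..<k}" using ij that(3) by (intro Sx_one) auto
      ultimately show False by simp
    next
      case False
      have "w!(j-1-t) \<in> Sx k t i (j-1-t)" "w!(j-1-t) \<in> Sx k t j (j-1-t)" using hi hj ij that(3) by auto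
      moreover have "Sx k t i (j-1-t) = {0}" using False that(3) ij assms by (intro Sx_zero) auto
      moreover have "Sx k t j (j-1-t) = {1..<k}" using False ij that(3) by (intro Sx_one) auto
      ultimately show False by simp
    qed
  qed
  have finF: "finite (Fam i)" if "i \<in> I" for i
  proof -
    have "Fam i \<subseteq> words k n" using sub[OF that] unfolding Cont_def by auto
    then show ?thesis by (rule finite_subset[OF _ finite_words])
  qed
  have cU: "card (\<Union>(Fam ` I)) = (\<Sum>i\<in>I. card (Fam i))"
  proof (rule card_UN_disjoint)
    show "finite I" unfolding I_def by simp
    show "\<forall>i\<in>I. finite (Fam i)" using finF by blast
    show "\<forall>i\<in>I. \<forall>j\<in>I. i \<noteq> j \<longrightarrow> Fam i \<inter> Fam j = {}"
      using disj by (metis disjoint_iff linorder_neqE_nat)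
  qed
  have finC: "finite Cont" unfolding Cont_def using finite_words by simp
  have "(\<Sum>i\<in>I. card (Fam i)) \<le> card Cont"
    using cU card_mono[OF finC] sub by (metis UN_least)
  moreover have "(\<Sum>i\<in>I. card (Fam i)) = t * ((k-1) * k^(e+1)) + (n - 2*t) * ((k-1)^2 * k^e)"
  proof -
    have I: "I = {1..t} \<union> {t+1..n-t}" unfolding I_def using assms by auto
    have "(\<Sum>i\<in>I. card (Fam i)) = (\<Sum>i\<in>{1..t}. card (Fam i)) + (\<Sum>i\<in>{t+1..n-t}. card (Fam i))"
      unfolding I by (rule sum.union_disjoint) auto
    also have "(\<Sum>i\<in>{1..t}. card (Fam i)) = (\<Sum>i\<in>{1..t}. (k-1) * k^(e+1))"
      by (rule sum.cong) (auto simp: low1)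
    also have "(\<Sum>i\<in>{t+1..n-t}. card (Fam i)) = (\<Sum>i\<in>{t+1..n-t}. (k-1)^2 * k^e)"
      by (rule sum.cong) (auto simp: low2)
    finally show ?thesis using assms by simp
  qed
  ultimately have Cge: "t * ((k-1) * k^(e+1)) + (n - 2*t) * ((k-1)^2 * k^e) \<le> card Cont" by simp
  have ineq: "n \<le> t * k + (n - 2*t) * (k-1)"
  proof -
    have "2 * t \<le> t * k" using assms by simp
    moreover have "(n - 2*t) * 1 \<le> (n - 2*t) * (k-1)" using assms by (intro mult_le_mono2) simp
    ultimately show ?thesis using assms by linarith
  qed
  have "n * ((k-1) * k^e) \<le> (t * k + (n - 2*t) * (k-1)) * ((k-1) * k^e)"
    using ineq by (rule mult_right_mono) simp
  also have "\<dots> = t * ((k-1) * k^(e+1)) + (n - 2*t) * ((k-1)^2 * k^e)"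
  proof -
    have gen: "(t*k + m*a) * (a*p) = t*(a*(k*p)) + m*(a*a*p)" for m a p :: nat
      by (simp add: algebra_simps)
    show ?thesis using gen[of "n - 2*t" "k-1" "k^e"] by (simp only: power2_eq_square power_Suc power_add power_one_right mult.commute[of "k^e" k])
  qed
  finally have nC: "n * ((k-1) * k^e) \<le> card Cont" using Cge by linarith
  have av: "avoid_count k n (replicate t 0) = k^n - card Cont"
  proof -
    have "{w \<in> words k n. \<not> sublist (replicate t 0) w} = words k n - Cont" unfolding Cont_def by auto
    moreover have "Cont \<subseteq> words k n" unfolding Cont_def by auto
    ultimately show ?thesis unfolding avoid_count_def
      using card_Diff_subset[OF finite_subset[OF _ finite_words]] card_words by metis
  qed
  have CleK: "card Cont \<le> k^n" using card_mono[OF finite_words, of Cont k n] card_words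
    unfolding Cont_def by auto
  define K where "K = real k"
  have K2: "K \<ge> 2" using assms unfolding K_def by simp
  have avr: "real (avoid_count k n (replicate t 0)) \<le> K^n - real n * (K-1) * K^e"
  proof -
    have "real (avoid_count k n (replicate t 0)) = K^n - real (card Cont)"
      unfolding av K_def using CleK by (simp add: of_nat_diff)
    moreover have "real n * (K-1) * K^e \<le> real (card Cont)"
      using nC assms unfolding K_def by (metis (mono_tags) of_nat_1 of_nat_diff of_nat_le_iff of_nat_mult of_nat_power mult.assoc order_trans le_refl one_le_numeral)
    ultimately show ?thesis by simp
  qed
  define x where "x = - (K-1) / K^(t+2)"
  have bet: "beta k t = K * (1 + x)"
  proof -
    have "real k powi (- int t - 1) = inverse (K^(t+1))"
      unfolding K_def
      by (metis minus_diff_eq power_int_minus power_int_of_nat diff_minus_eq_add of_nat_Suc add.commute Suc_eq_plus1 uminus_add_conv_diff)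
    then show ?thesis unfolding beta_def x_def K_def using K2
      by (simp add: field_simps K_def)
  qed
  have xg: "-1 \<le> x"
  proof -
    have "K - 1 \<le> K^(t+2)"
    proof -
      have "K \<le> K^(t+2)" using K2 by (metis One_nat_def add_gr_0 le_add2 less_numeral_extra(1) one_le_numeral order_trans power_increasing power_one_right zero_less_numeral Suc_leI)
      then show ?thesis by simp
    qed
    moreover have "K^(t+2) > 0" using K2 by simp
    ultimately have "(K-1) / K^(t+2) \<le> 1" by (simp add: pos_divide_le_eq)
    then show ?thesis unfolding x_def minus_divide_left[symmetric] by linarith
  qed
  have "K^n - real n * (K-1) * K^e = K^n * (1 + real n * x)"
    unfolding x_def ne using K2 by (simp add: field_simps power_add)
  also have "\<dots> \<le> K^n * (1 + x)^n"
    using Bernoulli_inequality[OF xg, of n] K2 by (intro mult_left_mono) auto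
  also have "\<dots> = beta k t ^ n" unfolding bet by (simp add: power_mult_distrib)
  finally show ?thesis using avr by linarith
qed

end
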